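(* Let $L \subseteq \Sigma^*$ be regular and $k\ge0$. Then $L$ is a Boolean combination of at most $k$ regular left ideals if and only if $\mathrm{alt}_L(x) \le k$ for all $x \in \Sigma^*$.
   Context: A language $P\subseteq\Sigma^*$ is a left ideal if $\Sigma^*P\subseteq P$. For $x=a_1\cdots a_n\in\Sigma^*$, a position $1\le i\le n$ is an $L$-alternation point if exactly one of the words $a_i\cdots a_n$ and $a_{i+1}\cdots a_n$ belongs to $L$; $\mathrm{alt}_L(x)$ is the number of $L$-alternation points of $x$. *)

theory Defs
  imports Main
begin

text \<open>Words over the alphabet \<Sigma> are lists over a finite type 'a (\<Sigma> = UNIV).
  A language is regular if it is accepted by a deterministic finite automaton.\<close>

definition regular :: "('a::finite) list set \<Rightarrow> bool" where
  "regular L \<longleftrightarrow>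
     (\<exists>(Q::nat set) (\<delta>::nat \<Rightarrow> 'a \<Rightarrow> nat) q0 F.
        finite Q \<and> q0 \<in> Q \<and> (\<forall>q\<in>Q. \<forall>a. \<delta> q a \<in> Q) \<and> F \<subseteq> Q \<and>
        L = {w. foldl \<delta> q0 w \<in> F})"

definition left_ideal :: "'a list set \<Rightarrow> bool" where
  "left_ideal P \<longleftrightarrow> (\<forall>u w. w \<in> P \<longrightarrow> u @ w \<in> P)"

definition bool_comb :: "'a list set list \<Rightarrow> 'a list set \<Rightarrow> bool" where
  "bool_comb Ps L \<longleftrightarrow> (\<exists>f :: bool list \<Rightarrow> bool. \<forall>x. (x \<in> L) = f (map (\<lambda>P. x \<in> P) Ps))"

text \<open>Number of L-alternation points of x = a_1...a_n: positions i (1 \<le> i \<le> n) such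
  that exactly one of a_i...a_n and a_(i+1)...a_n is in L (0-based here).\<close>
definition alt :: "'a list set \<Rightarrow> 'a list \<Rightarrow> nat" where
  "alt L x = card {i. i < length x \<and> (drop i x \<in> L) \<noteq> (drop (Suc i) x \<in> L)}"

end

theory Submission imports Defs begin

definition cnt :: "'a list set \<Rightarrow> 'a list \<Rightarrow> 'a list \<Rightarrow> nat" where
  "cnt L p w = card {i. i < length p \<and> (drop i p @ w \<in> L) \<noteq> (drop (Suc i) p @ w \<in> L)}"

lemma alt_append: "alt L (p @ w) = alt L w + cnt L p w"
proof -
  let ?C = "{i. i < length (p@w) \<and> (drop i (p@w) \<in> L) \<noteq> (drop (Suc i) (p@w) \<in> L)}"
  let ?A = "{i. i < length p \<and> (drop i p @ w \<in> L) \<noteq> (drop (Suc i) p @ w \<in> L)}"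
  let ?W = "{i. i < length w \<and> (drop i w \<in> L) \<noteq> (drop (Suc i) w \<in> L)}"
  have eq: "?C = ?A \<union> (\<lambda>i. i + length p) ` ?W"
  proof (rule set_eqI, rule iffI)
    fix i assume "i \<in> ?C"
    then show "i \<in> ?A \<union> (\<lambda>i. i + length p) ` ?W"
    proof (cases "i < length p")
      case True thus ?thesis using \<open>i \<in> ?C\<close> by auto
    next
      case False
      hence "i = (i - length p) + length p" by simp
      moreover have "i - length p \<in> ?W" using False \<open>i \<in> ?C\<close>
        by (auto simp: Suc_diff_le)
      ultimately show ?thesis by blast
    qed
  next
    fix i assume "i \<in> ?A \<union> (\<lambda>i. i + length p) ` ?W"
    thus "i \<in> ?C" by auto
  qed
  have "card ?C = card ?A + card ((\<lambda>i. i + length p) ` ?W)"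
    unfolding eq by (rule card_Un_disjoint) auto
  also have "card ((\<lambda>i. i + length p) ` ?W) = card ?W"
    by (rule card_image) (auto simp: inj_on_def)
  finally show ?thesis unfolding alt_def cnt_def by simp
qed

lemma alt_Cons: "alt L (a # x) = alt L x + (if (a # x \<in> L) \<noteq> (x \<in> L) then 1 else 0)"
proof -
  have "alt L ([a] @ x) = alt L x + cnt L [a] x" by (rule alt_append)
  moreover have "{i. i < length [a] \<and> (drop i [a] @ x \<in> L) \<noteq> (drop (Suc i) [a] @ x \<in> L)}
     = (if (a # x \<in> L) \<noteq> (x \<in> L) then {0} else {})" by auto
  ultimately show ?thesis unfolding cnt_def by simp
qed

lemma alt_parity: "(x \<in> L) = (([] \<in> L) \<noteq> odd (alt L x))"
proof (induction x)
  case Nil thus ?case by (simp add: alt_def)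
next
  case (Cons a x) thus ?case by (simp only: alt_Cons) auto
qed


lemma left_ideal_drop:
  assumes "left_ideal P" "drop m x \<in> P" "m' \<le> m"
  shows "drop m' x \<in> P"
proof -
  have "drop m' x = take (m - m') (drop m' x) @ drop (m - m') (drop m' x)" by (rule append_take_drop_id[symmetric])
  also have "drop (m - m') (drop m' x) = drop m x" using assms(3) by simp
  finally show ?thesis using assms unfolding left_ideal_def by metis
qed

lemma forward:
  assumes li: "\<forall>P\<in>set Ps. left_ideal P" and bc: "bool_comb Ps L"
  shows "alt L x \<le> length Ps"
proof -
  obtain f where f: "\<And>x. (x \<in> L) = f (map (\<lambda>P. x \<in> P) Ps)" using bc unfolding bool_comb_def by blast
  let ?A = "{i. i < length x \<and> (drop i x \<in> L) \<noteq> (drop (Suc i) x \<in> L)}"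
  have ex: "\<exists>j<length Ps. (drop i x \<in> Ps!j) \<noteq> (drop (Suc i) x \<in> Ps!j)" if "i \<in> ?A" for i
  proof (rule ccontr)
    assume "\<not> ?thesis"
    hence "map (\<lambda>P. drop i x \<in> P) Ps = map (\<lambda>P. drop (Suc i) x \<in> P) Ps"
      by (simp add: list_eq_iff_nth_eq)
    hence "(drop i x \<in> L) = (drop (Suc i) x \<in> L)" using f by metis
    thus False using that by simp
  qed
  define J where "J i = (SOME j. j<length Ps \<and> (drop i x \<in> Ps!j) \<noteq> (drop (Suc i) x \<in> Ps!j))" for i
  have J: "J i < length Ps \<and> (drop i x \<in> Ps!(J i)) \<noteq> (drop (Suc i) x \<in> Ps!(J i))" if "i \<in> ?A" for i
    unfolding J_def using someI_ex[OF ex[OF that]] .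
  have Jm: "drop i x \<in> Ps!(J i) \<and> drop (Suc i) x \<notin> Ps!(J i)" if "i \<in> ?A" for i
  proof -
    have "left_ideal (Ps!(J i))" using li J[OF that] by simp
    thus ?thesis using J[OF that] left_ideal_drop[of "Ps!(J i)" "Suc i" x i] by auto
  qed
  have inj: "inj_on J ?A"
  proof (rule inj_onI)
    fix i i' assume a: "i \<in> ?A" "i' \<in> ?A" "J i = J i'"
    show "i = i'"
    proof (rule ccontr)
      assume "i \<noteq> i'"
      then consider "Suc i \<le> i'" | "Suc i' \<le> i" by linarith
      thus False
      proof cases
        case 1
        have "left_ideal (Ps!(J i))" using li J[OF a(1)] by simp
        thus False using Jm[OF a(1)] Jm[OF a(2)] a(3) left_ideal_drop[of "Ps!(J i)" i' x "Suc i"] 1 by auto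
      next
        case 2
        have "left_ideal (Ps!(J i))" using li J[OF a(1)] by simp
        thus False using Jm[OF a(1)] Jm[OF a(2)] a(3) left_ideal_drop[of "Ps!(J i)" i x "Suc i'"] 2 by auto
      qed
    qed
  qed
  have "card ?A \<le> card {..<length Ps}"
    by (rule card_inj_on_le[OF inj]) (use J in auto)
  thus ?thesis unfolding alt_def by simp
qed

definition quot :: "'a list \<Rightarrow> 'a list set \<Rightarrow> 'a list set" where
  "quot p L = {w. p @ w \<in> L}"

lemma nerode:
  fixes P :: "('a::finite) list set"
  assumes fin: "finite (range (\<lambda>p. quot p P))"
  shows "regular P"
proof -
  define R where "R = range (\<lambda>p. quot p P)"
  obtain e and n :: nat where e: "e ` R = {i. i < n}" "inj_on e R"
    using finite_imp_inj_to_nat_seg[OF fin] unfolding R_def by blast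
  define D where "D S a = {w. a # w \<in> S}" for S and a :: 'a
  have Dq: "D (quot p P) a = quot (p @ [a]) P" for p a by (simp add: D_def quot_def)
  define \<delta> where "\<delta> q a = (if q < n then e (D (inv_into R e q) a) else e (quot [] P))" for q a
  have inv: "inv_into R e (e S) = S" if "S \<in> R" for S using e(2) that by simp
  have step: "\<delta> (e (quot p P)) a = e (quot (p @ [a]) P)" for p a
  proof -
    have "quot p P \<in> R" unfolding R_def by simp
    hence "e (quot p P) < n" using e(1) by blast
    thus ?thesis unfolding \<delta>_def using inv[OF \<open>quot p P \<in> R\<close>] Dq by simp
  qed
  have run: "foldl \<delta> (e (quot [] P)) w = e (quot w P)" for w
    by (induction w rule: rev_induct) (simp_all add: step)
  define F where "F = e ` {S\<in>R. [] \<in> S}"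
  have inR: "quot p P \<in> R" for p unfolding R_def by simp
  have "P = {w. foldl \<delta> (e (quot [] P)) w \<in> F}"
  proof (rule set_eqI)
    fix w
    have "(w \<in> P) = ([] \<in> quot w P)" by (simp add: quot_def)
    also have "\<dots> = (e (quot w P) \<in> F)" unfolding F_def
      using e(2) inR[of w] by (auto dest: inj_onD)
    finally show "(w \<in> P) = (w \<in> {w. foldl \<delta> (e (quot [] P)) w \<in> F})" by (simp add: run)
  qed
  moreover have "\<forall>q\<in>{i. i < n}. \<forall>a. \<delta> q a \<in> {i. i < n}"
  proof (intro ballI allI)
    fix q a assume q: "q \<in> {i. i < n}"
    then obtain S where S: "S \<in> R" "q = e S" using e(1) by (metis imageE)
    then obtain p where "S = quot p P" unfolding R_def by auto
    thus "\<delta> q a \<in> {i. i < n}" using S step inR e(1) by auto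
  qed
  moreover have "e (quot [] P) \<in> {i. i < n}" using e(1) inR by blast
  moreover have "F \<subseteq> {i. i < n}" using e(1) unfolding F_def by auto
  ultimately show ?thesis unfolding regular_def by blast
qed

lemma regular_quot_finite:
  assumes "regular L"
  shows "finite (range (\<lambda>p. quot p L))"
proof -
  obtain Q :: "nat set" and \<delta> q0 F where r: "finite Q" "q0 \<in> Q" "\<forall>q\<in>Q. \<forall>a. \<delta> q a \<in> Q" "F \<subseteq> Q"
    "L = {w. foldl \<delta> q0 w \<in> F}" using assms unfolding regular_def by blast
  have inQ: "foldl \<delta> q w \<in> Q" if "q \<in> Q" for q w
    using that by (induction w arbitrary: q) (use r(3) in auto)
  have "range (\<lambda>p. quot p L) \<subseteq> (\<lambda>q. {w. foldl \<delta> q w \<in> F}) ` Q"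
  proof
    fix S assume "S \<in> range (\<lambda>p. quot p L)"
    then obtain p where "S = quot p L" by auto
    hence "S = {w. foldl \<delta> (foldl \<delta> q0 p) w \<in> F}" by (simp add: quot_def r(5))
    thus "S \<in> (\<lambda>q. {w. foldl \<delta> q w \<in> F}) ` Q" using inQ[OF r(2)] by blast
  qed
  thus ?thesis using r(1) finite_subset by blast
qed


lemma level_regular:
  fixes L :: "('a::finite) list set"
  assumes "regular L"
  shows "regular {x. j \<le> alt L x}"
proof (rule nerode)
  define QL where "QL = range (\<lambda>u. quot u L)"
  have fQL: "finite QL" unfolding QL_def by (rule regular_quot_finite[OF assms])
  define \<sigma> where "\<sigma> w = {T \<in> QL. w \<in> T}" for w
  have memq: "(quot u L \<in> \<sigma> w) = (u @ w \<in> L)" for u w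
    unfolding \<sigma>_def QL_def quot_def by auto
  have fs: "finite (range \<sigma>)"
    by (rule finite_subset[of _ "Pow QL"]) (use fQL in \<open>auto simp: \<sigma>_def\<close>)
  define G where "G p S = min j (card {i. i < length p \<and> (quot (drop i p) L \<in> S) \<noteq> (quot (drop (Suc i) p) L \<in> S)})" for p S
  define H where "H p S = (if S \<in> range \<sigma> then G p S else undefined)" for p S
  have gH: "min j (cnt L p w) = H p (\<sigma> w)" for p w
    unfolding H_def G_def cnt_def by (simp add: memq)
  define Fs where "Fs = {H'. \<forall>S. (S \<in> range \<sigma> \<longrightarrow> H' S \<in> {..j}) \<and> (S \<notin> range \<sigma> \<longrightarrow> H' S = undefined)}"
  have fFs: "finite Fs" unfolding Fs_def by (rule finite_set_of_finite_funs[OF fs]) simp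
  have HFs: "H p \<in> Fs" for p unfolding Fs_def H_def G_def by auto
  have q: "quot p {x. j \<le> alt L x} = (\<lambda>H'. {w. j \<le> alt L w + H' (\<sigma> w)}) (H p)" for p
  proof -
    have "quot p {x. j \<le> alt L x} = {w. j \<le> alt L w + min j (cnt L p w)}"
      unfolding quot_def by (auto simp: alt_append)
    thus ?thesis by (simp add: gH)
  qed
  have "range (\<lambda>p. quot p {x. j \<le> alt L x}) \<subseteq> (\<lambda>H'. {w. j \<le> alt L w + H' (\<sigma> w)}) ` Fs"
    using q HFs by auto
  thus "finite (range (\<lambda>p. quot p {x. j \<le> alt L x}))"
    using fFs finite_subset by blast
qed

lemma level_left_ideal: "left_ideal {x. j \<le> alt L x}"
  unfolding left_ideal_def by (auto simp: alt_append)

theorem lemma5p12: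
  fixes L :: "('a::finite) list set" and k :: nat
  assumes "regular L"
  shows "(\<exists>Ps. length Ps \<le> k \<and> (\<forall>P\<in>set Ps. regular P \<and> left_ideal P) \<and> bool_comb Ps L)
         \<longleftrightarrow> (\<forall>x. alt L x \<le> k)"
proof
  assume "\<exists>Ps. length Ps \<le> k \<and> (\<forall>P\<in>set Ps. regular P \<and> left_ideal P) \<and> bool_comb Ps L"
  then obtain Ps where "length Ps \<le> k" "\<forall>P\<in>set Ps. left_ideal P" "bool_comb Ps L" by blast
  thus "\<forall>x. alt L x \<le> k" using forward by (metis le_trans)
next
  assume A: "\<forall>x. alt L x \<le> k"
  define Ps where "Ps = map (\<lambda>j. {x. j \<le> alt L x}) [1..<Suc k]"
  have "length Ps \<le> k" unfolding Ps_def by simp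
  moreover have "\<forall>P\<in>set Ps. regular P \<and> left_ideal P"
    unfolding Ps_def using level_regular[OF assms] level_left_ideal by auto
  moreover have "bool_comb Ps L"
    unfolding bool_comb_def
  proof (intro exI allI)
    fix x
    have "length (filter (\<lambda>P. x \<in> P) Ps) = length (filter (\<lambda>j. j \<le> alt L x) [1..<Suc k])"
      unfolding Ps_def by (simp add: filter_map comp_def)
    also have "\<dots> = card ({j. j \<le> alt L x} \<inter> set [1..<Suc k])"
      by (rule distinct_length_filter) simp
    also have "{j. j \<le> alt L x} \<inter> set [1..<Suc k] = {1..alt L x}"
      using A[rule_format, of x] by auto
    finally have "length (filter (\<lambda>P. x \<in> P) Ps) = alt L x" by simp
    hence "length (filter id (map (\<lambda>P. x \<in> P) Ps)) = alt L x" by (simp add: filter_map comp_def)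
    thus "(x \<in> L) = (\<lambda>bs. ([] \<in> L) \<noteq> odd (length (filter id bs))) (map (\<lambda>P. x \<in> P) Ps)"
      using alt_parity[of x L] by simp
  qed
  ultimately show "\<exists>Ps. length Ps \<le> k \<and> (\<forall>P\<in>set Ps. regular P \<and> left_ideal P) \<and> bool_comb Ps L"
    by blast
qed

end
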